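(* Let $p,q\in\mathbb{R}[t_1,\dots,t_\ell]$ satisfy $p\succeq0$, $q\succeq0$ and $p\simeq q$. Then $p$ and $q$ have the same leading homogeneous component.
   Context: For $p\in\mathbb{R}[\bar t]$, $\bar t=(t_1,\dots,t_\ell)$, write $p=p_0+p_1+\dots+p_d$ with $p_i$ homogeneous of degree $i$ and $p_d\ne0$; $p_d$ is the leading homogeneous component of $p$. Write $p\preceq q$ if there is $\bar c\in\mathbb{N}^\ell$ such that $p(\bar n)\le q(\bar n+\bar c)$ for all $\bar n\in\mathbb{N}^\ell$ large enough; $p\simeq q$ if $p\preceq q$ and $q\preceq p$; and $p\succeq0$ if $p(\bar n)\ge0$ for all $\bar n\in\mathbb{N}^\ell$ large enough. ("Large enough" means all coordinates of $\bar n$ are at least some bound.) *)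

theory Defs
  imports Complex_Main "HOL-Library.Poly_Mapping"
begin

text \<open>Real polynomials in variables t_0, t_1, ... are represented as finitely supported
maps from monomials (exponent vectors nat =>0 nat) to real coefficients.
A polynomial lies in R[t_1..t_l] iff all its monomials only involve variables < l.\<close>

type_synonym rpoly = "(nat \<Rightarrow>\<^sub>0 nat) \<Rightarrow>\<^sub>0 real"

definition in_vars :: "nat \<Rightarrow> rpoly \<Rightarrow> bool" where
  "in_vars l p \<longleftrightarrow> (\<forall>m. m \<in> Poly_Mapping.keys p \<longrightarrow> Poly_Mapping.keys m \<subseteq> {..<l})"

definition mon_eval :: "(nat \<Rightarrow>\<^sub>0 nat) \<Rightarrow> (nat \<Rightarrow> real) \<Rightarrow> real" where
  "mon_eval m x = (\<Prod>i\<in>Poly_Mapping.keys m. x i ^ Poly_Mapping.lookup m i)"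

definition peval :: "rpoly \<Rightarrow> (nat \<Rightarrow> nat) \<Rightarrow> real" where
  "peval p n = (\<Sum>m\<in>Poly_Mapping.keys p. Poly_Mapping.lookup p m * mon_eval m (\<lambda>i. real (n i)))"

definition mdeg :: "(nat \<Rightarrow>\<^sub>0 nat) \<Rightarrow> nat" where
  "mdeg m = (\<Sum>i\<in>Poly_Mapping.keys m. Poly_Mapping.lookup m i)"

definition pdeg :: "rpoly \<Rightarrow> nat" where
  "pdeg p = Max (mdeg ` Poly_Mapping.keys p)"

definition lead_hom :: "rpoly \<Rightarrow> (nat \<Rightarrow>\<^sub>0 nat) \<Rightarrow> real" where
  "lead_hom p m = (if mdeg m = pdeg p then Poly_Mapping.lookup p m else 0)"

definition large_enough :: "nat \<Rightarrow> ((nat \<Rightarrow> nat) \<Rightarrow> bool) \<Rightarrow> bool" where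
  "large_enough l P \<longleftrightarrow> (\<exists>N. \<forall>n. (\<forall>i<l. N \<le> n i) \<longrightarrow> P n)"

definition pprec :: "nat \<Rightarrow> rpoly \<Rightarrow> rpoly \<Rightarrow> bool" where
  "pprec l p q \<longleftrightarrow> (\<exists>c::nat \<Rightarrow> nat. large_enough l (\<lambda>n. peval p n \<le> peval q (\<lambda>i. n i + c i)))"

definition psim :: "nat \<Rightarrow> rpoly \<Rightarrow> rpoly \<Rightarrow> bool" where
  "psim l p q \<longleftrightarrow> pprec l p q \<and> pprec l q p"

definition pnonneg :: "nat \<Rightarrow> rpoly \<Rightarrow> bool" where
  "pnonneg l p \<longleftrightarrow> large_enough l (\<lambda>n. 0 \<le> peval p n)"

end

theory Submission imports Defs "HOL-Computational_Algebra.Polynomial" begin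

lemma univ_zero:
  fixes b :: "nat \<Rightarrow> real"
  assumes fin: "finite K" and z: "\<And>x::nat. x \<ge> 1 \<Longrightarrow> (\<Sum>k\<in>K. b k * real x ^ k) = 0"
    and k: "k \<in> K"
  shows "b k = 0"
proof -
  define P where "P = (\<Sum>k\<in>K. monom (b k) k)"
  have ev: "poly P (real x) = (\<Sum>k\<in>K. b k * real x ^ k)" for x
    unfolding P_def by (simp add: poly_sum poly_monom)
  have "P = 0"
  proof (rule ccontr)
    assume "P \<noteq> 0"
    then have "finite {x. poly P x = 0}" by (rule poly_roots_finite)
    moreover have "real ` {1..} \<subseteq> {x. poly P x = 0}" using ev z by auto
    ultimately have "finite (real ` {1::nat..})" by (rule finite_subset[rotated])
    then have "finite {1::nat..}" by (rule finite_imageD) auto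
    then show False using infinite_Ici[of "1::nat"] by simp
  qed
  then have "coeff P k = 0" by simp
  moreover have "coeff P k = b k" unfolding P_def using fin k
    by (simp add: coeff_sum coeff_monom)
  ultimately show ?thesis by simp
qed

lemma multi_zero:
  fixes r :: "'a \<Rightarrow> real" and e :: "'a \<Rightarrow> nat \<Rightarrow> nat"
  assumes "finite S"
    and "\<forall>m\<in>S. \<forall>m'\<in>S. (\<forall>i<l. e m i = e m' i) \<longrightarrow> m = m'"
    and "\<forall>a::nat\<Rightarrow>nat. (\<forall>i. 1 \<le> a i) \<longrightarrow> (\<Sum>m\<in>S. r m * (\<Prod>i<l. real (a i) ^ e m i)) = 0"
    and "m \<in> S"
  shows "r m = 0"
  using assms
proof (induction l arbitrary: S m)
  case 0
  then have S: "S = {m}" by auto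
  from 0(3)[rule_format, of "\<lambda>_. 1"] show ?case by (simp add: S)
next
  case (Suc l)
  define T where "T k = {m'\<in>S. e m' l = k}" for k
  define G where "G k a = (\<Sum>m\<in>T k. r m * (\<Prod>i<l. real (a i) ^ e m i))" for k a
  have G0: "G k a = 0" if a: "\<forall>i. 1 \<le> a i" and k: "k \<in> (\<lambda>m. e m l) ` S" for k a
  proof (rule univ_zero[where K = "(\<lambda>m. e m l) ` S" and b = "\<lambda>k. G k a"])
    show "finite ((\<lambda>m. e m l) ` S)" using Suc.prems by simp
    show "k \<in> (\<lambda>m. e m l) ` S" by fact
    fix x :: nat assume x: "1 \<le> x"
    define a' where "a' = a(l := x)"
    have a': "\<forall>i. 1 \<le> a' i" using a x by (simp add: a'_def)
    have "0 = (\<Sum>m\<in>S. r m * (\<Prod>i<Suc l. real (a' i) ^ e m i))"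
      using Suc.prems(3) a' by simp
    also have "\<dots> = (\<Sum>m\<in>S. r m * (\<Prod>i<l. real (a i) ^ e m i) * real x ^ e m l)"
      by (rule sum.cong) (auto simp: a'_def lessThan_Suc)
    also have "\<dots> = (\<Sum>k\<in>(\<lambda>m. e m l) ` S. \<Sum>m\<in>T k. r m * (\<Prod>i<l. real (a i) ^ e m i) * real x ^ e m l)"
      unfolding T_def by (rule sum.group[symmetric]) (use Suc.prems(1) in auto)
    also have "\<dots> = (\<Sum>k\<in>(\<lambda>m. e m l) ` S. G k a * real x ^ k)"
      unfolding G_def sum_distrib_right by (rule sum.cong) (auto simp: T_def intro!: sum.cong)
    finally show "(\<Sum>k\<in>(\<lambda>m. e m l) ` S. G k a * real x ^ k) = 0" by simp
  qed
  define k0 where "k0 = e m l"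
  have f1: "finite (T k0)" using Suc.prems(1) by (simp add: T_def)
  have f2: "m \<in> T k0" using Suc.prems(4) by (simp add: T_def k0_def)
  have f3: "\<forall>m\<in>T k0. \<forall>m'\<in>T k0. (\<forall>i<l. e m i = e m' i) \<longrightarrow> m = m'"
    using Suc.prems(2) unfolding T_def by (auto simp: less_Suc_eq)
  have f4: "\<forall>a. (\<forall>i. 1 \<le> a i) \<longrightarrow> (\<Sum>m\<in>T k0. r m * (\<Prod>i<l. real (a i) ^ e m i)) = 0"
    using G0 Suc.prems(4) unfolding G_def k0_def by auto
  show ?case by (rule Suc.IH[OF f1 f3 f4 f2])
qed


lemma mon_lim:
  assumes "mdeg m \<le> D"
  shows "(\<lambda>t::nat. mon_eval m (\<lambda>i. real (t * a i + c i)) / real t ^ D) \<longlonglongrightarrow>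
           (if mdeg m = D then mon_eval m (\<lambda>i. real (a i)) else 0)"
proof -
  define f where "f t = (\<Prod>i\<in>Poly_Mapping.keys m. (real (a i) + real (c i) * (1 / real t)) ^ Poly_Mapping.lookup m i) * (1 / real t) ^ (D - mdeg m)" for t :: nat
  have eq: "mon_eval m (\<lambda>i. real (t * a i + c i)) / real t ^ D = f t" if t: "t > 0" for t :: nat
  proof -
    have "mon_eval m (\<lambda>i. real (t * a i + c i)) = (\<Prod>i\<in>Poly_Mapping.keys m. real t ^ Poly_Mapping.lookup m i * (real (a i) + real (c i) * (1 / real t)) ^ Poly_Mapping.lookup m i)"
      unfolding mon_eval_def
    proof (rule prod.cong)
      fix i
      have "real (t * a i + c i) = real t * (real (a i) + real (c i) * (1 / real t))"
        using t by (simp add: field_simps)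
      then show "real (t * a i + c i) ^ Poly_Mapping.lookup m i = real t ^ Poly_Mapping.lookup m i * (real (a i) + real (c i) * (1 / real t)) ^ Poly_Mapping.lookup m i"
        by (simp add: power_mult_distrib)
    qed simp
    also have "\<dots> = real t ^ mdeg m * (\<Prod>i\<in>Poly_Mapping.keys m. (real (a i) + real (c i) * (1 / real t)) ^ Poly_Mapping.lookup m i)"
      by (simp add: prod.distrib mdeg_def power_sum)
    finally have 1: "mon_eval m (\<lambda>i. real (t * a i + c i)) = \<dots>" .
    have 2: "real t ^ D = real t ^ mdeg m * real t ^ (D - mdeg m)"
      using assms by (simp add: power_add[symmetric])
    show ?thesis unfolding 1 2 f_def using t by (simp add: power_one_over)
  qed
  have lim: "f \<longlonglongrightarrow> (\<Prod>i\<in>Poly_Mapping.keys m. (real (a i) + real (c i) * 0) ^ Poly_Mapping.lookup m i) * 0 ^ (D - mdeg m)"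
    unfolding f_def
    by (intro tendsto_intros lim_inverse_n')
  have "(if mdeg m = D then mon_eval m (\<lambda>i. real (a i)) else 0) = (\<Prod>i\<in>Poly_Mapping.keys m. (real (a i) + real (c i) * 0) ^ Poly_Mapping.lookup m i) * 0 ^ (D - mdeg m)"
    using assms by (simp add: mon_eval_def)
  with lim have "f \<longlonglongrightarrow> (if mdeg m = D then mon_eval m (\<lambda>i. real (a i)) else 0)" by simp
  then show ?thesis
    by (rule Lim_transform_eventually) (use eq in \<open>auto simp: eventually_sequentially intro!: exI[of _ 1]\<close>)
qed


definition LD :: "nat \<Rightarrow> rpoly \<Rightarrow> (nat \<Rightarrow> nat) \<Rightarrow> real" where
  "LD D p a = (\<Sum>m\<in>Poly_Mapping.keys p. Poly_Mapping.lookup p m * (if mdeg m = D then mon_eval m (\<lambda>i. real (a i)) else 0))"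

lemma peval_lim:
  assumes "\<forall>m\<in>Poly_Mapping.keys p. mdeg m \<le> D"
  shows "(\<lambda>t::nat. peval p (\<lambda>i. t * a i + c i) / real t ^ D) \<longlonglongrightarrow> LD D p a"
proof -
  have "(\<lambda>t::nat. peval p (\<lambda>i. t * a i + c i) / real t ^ D) =
     (\<lambda>t. \<Sum>m\<in>Poly_Mapping.keys p. Poly_Mapping.lookup p m * (mon_eval m (\<lambda>i. real (t * a i + c i)) / real t ^ D))"
    by (simp add: peval_def sum_divide_distrib)
  moreover have "\<dots> \<longlonglongrightarrow> LD D p a"
    unfolding LD_def using assms by (intro tendsto_sum tendsto_mult_left mon_lim) auto
  ultimately show ?thesis by simp
qed

lemma LD_le:
  assumes hp: "\<forall>m\<in>Poly_Mapping.keys p. mdeg m \<le> D" and hq: "\<forall>m\<in>Poly_Mapping.keys q. mdeg m \<le> D"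
    and h: "\<forall>n. (\<forall>i<l. N \<le> n i) \<longrightarrow> peval p n \<le> peval q (\<lambda>i. n i + c i)"
    and a: "\<forall>i. 1 \<le> a i"
  shows "LD D p a \<le> LD D q a"
proof (rule LIMSEQ_le)
  show "(\<lambda>t::nat. peval p (\<lambda>i. t * a i + 0) / real t ^ D) \<longlonglongrightarrow> LD D p a"
    using peval_lim[OF hp] .
  show "(\<lambda>t::nat. peval q (\<lambda>i. t * a i + c i) / real t ^ D) \<longlonglongrightarrow> LD D q a"
    using peval_lim[OF hq] .
  show "\<exists>M. \<forall>t\<ge>M. peval p (\<lambda>i. t * a i + 0) / real t ^ D \<le> peval q (\<lambda>i. t * a i + c i) / real t ^ D"
  proof (intro exI allI impI)
    fix t assume t: "N \<le> t"
    have "\<forall>i<l. N \<le> t * a i"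
    proof (intro allI impI)
      fix i
      show "N \<le> t * a i" using a t by (metis le_trans mult_le_mono2 mult_1_right)
    qed
    then have "peval p (\<lambda>i. t * a i) \<le> peval q (\<lambda>i. t * a i + c i)" using h by auto
    then show "peval p (\<lambda>i. t * a i + 0) / real t ^ D \<le> peval q (\<lambda>i. t * a i + c i) / real t ^ D"
      by (simp add: divide_right_mono)
  qed
qed

lemma LD_eq:
  assumes "finite K"
  shows "LD D p a = (\<Sum>m\<in>{m\<in>Poly_Mapping.keys p \<union> K. mdeg m = D}. Poly_Mapping.lookup p m * mon_eval m (\<lambda>i. real (a i)))"
proof -
  have "LD D p a = (\<Sum>m\<in>Poly_Mapping.keys p \<union> K. Poly_Mapping.lookup p m * (if mdeg m = D then mon_eval m (\<lambda>i. real (a i)) else 0))"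
    unfolding LD_def using assms
    by (intro sum.mono_neutral_left) (auto simp: in_keys_iff)
  also have "\<dots> = (\<Sum>m\<in>Poly_Mapping.keys p \<union> K. if mdeg m = D then Poly_Mapping.lookup p m * mon_eval m (\<lambda>i. real (a i)) else 0)"
    by (rule sum.cong) auto
  also have "\<dots> = (\<Sum>m\<in>{m\<in>Poly_Mapping.keys p \<union> K. mdeg m = D}. Poly_Mapping.lookup p m * mon_eval m (\<lambda>i. real (a i)))"
    by (rule sum.inter_filter[symmetric]) (use assms in simp)
  finally show ?thesis .
qed

lemma mon_eval_vars:
  assumes "Poly_Mapping.keys m \<subseteq> {..<l}"
  shows "mon_eval m x = (\<Prod>i<l. x i ^ Poly_Mapping.lookup m i)"
  unfolding mon_eval_def using assms
  by (intro prod.mono_neutral_left) (auto simp: in_keys_iff)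


theorem proposition4p7:
  fixes l :: nat and p q :: rpoly
  assumes "in_vars l p" and "in_vars l q"
    and "pnonneg l p" and "pnonneg l q"
    and "psim l p q"
  shows "lead_hom p = lead_hom q"
proof (cases "Poly_Mapping.keys p \<union> Poly_Mapping.keys q = {}")
  case True
  then have "p = 0" "q = 0" by auto
  then show ?thesis by simp
next
  case False
  define K where "K = Poly_Mapping.keys p \<union> Poly_Mapping.keys q"
  have finK: "finite K" by (simp add: K_def)
  define D where "D = Max (mdeg ` K)"
  have hp: "\<forall>m\<in>Poly_Mapping.keys p. mdeg m \<le> D" and hq: "\<forall>m\<in>Poly_Mapping.keys q. mdeg m \<le> D"
    unfolding D_def K_def by (auto intro: Max_ge)
  obtain m0 where m0: "m0 \<in> K" "mdeg m0 = D"
    using False finK unfolding D_def K_def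
    by (metis (no_types, lifting) K_def Max_in finite_imageI image_iff image_is_empty)
  from assms(5) obtain c1 N1 c2 N2 where
    h1: "\<forall>n. (\<forall>i<l. N1 \<le> n i) \<longrightarrow> peval p n \<le> peval q (\<lambda>i. n i + c1 i)" and
    h2: "\<forall>n. (\<forall>i<l. N2 \<le> n i) \<longrightarrow> peval q n \<le> peval p (\<lambda>i. n i + c2 i)"
    unfolding psim_def pprec_def large_enough_def by blast
  define S where "S = {m\<in>K. mdeg m = D}"
  have finS: "finite S" using finK by (simp add: S_def)
  have Svars: "Poly_Mapping.keys m \<subseteq> {..<l}" if "m \<in> S" for m
    using that assms(1,2) unfolding S_def K_def in_vars_def by auto
  have LDS: "LD D r a = (\<Sum>m\<in>S. Poly_Mapping.lookup r m * (\<Prod>i<l. real (a i) ^ Poly_Mapping.lookup m i))"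
    if r: "Poly_Mapping.keys r \<subseteq> K" for r a
  proof -
    have "LD D r a = (\<Sum>m\<in>{m\<in>Poly_Mapping.keys r \<union> K. mdeg m = D}. Poly_Mapping.lookup r m * mon_eval m (\<lambda>i. real (a i)))"
      by (rule LD_eq[OF finK])
    also have "{m\<in>Poly_Mapping.keys r \<union> K. mdeg m = D} = S" using r by (auto simp: S_def)
    finally show ?thesis using Svars by (auto intro!: sum.cong simp: mon_eval_vars)
  qed
  have coeq: "Poly_Mapping.lookup p m - Poly_Mapping.lookup q m = 0" if m: "m \<in> S" for m
  proof (rule multi_zero[where S = S and l = l and e = "\<lambda>m i. Poly_Mapping.lookup m i"])
    show "finite S" by fact
    show "m \<in> S" by fact
    show "\<forall>m\<in>S. \<forall>m'\<in>S. (\<forall>i<l. Poly_Mapping.lookup m i = Poly_Mapping.lookup m' i) \<longrightarrow> m = m'"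
    proof (intro ballI impI)
      fix m m' assume mm: "m \<in> S" "m' \<in> S" and eq: "\<forall>i<l. Poly_Mapping.lookup m i = Poly_Mapping.lookup m' i"
      show "m = m'"
      proof (rule poly_mapping_eqI)
        fix i show "Poly_Mapping.lookup m i = Poly_Mapping.lookup m' i"
        proof (cases "i < l")
          case True then show ?thesis using eq by simp
        next
          case False
          then have "i \<notin> Poly_Mapping.keys m" "i \<notin> Poly_Mapping.keys m'" using Svars[OF mm(1)] Svars[OF mm(2)] by auto
          then show ?thesis by (simp add: in_keys_iff)
        qed
      qed
    qed
    show "\<forall>a. (\<forall>i. 1 \<le> a i) \<longrightarrow> (\<Sum>m\<in>S. (Poly_Mapping.lookup p m - Poly_Mapping.lookup q m) * (\<Prod>i<l. real (a i) ^ Poly_Mapping.lookup m i)) = 0"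
    proof (intro allI impI)
      fix a :: "nat \<Rightarrow> nat" assume a: "\<forall>i. 1 \<le> a i"
      have "LD D p a \<le> LD D q a" by (rule LD_le[OF hp hq h1 a])
      moreover have "LD D q a \<le> LD D p a" by (rule LD_le[OF hq hp h2 a])
      ultimately have "LD D p a - LD D q a = 0" by simp
      then show "(\<Sum>m\<in>S. (Poly_Mapping.lookup p m - Poly_Mapping.lookup q m) * (\<Prod>i<l. real (a i) ^ Poly_Mapping.lookup m i)) = 0"
        by (simp add: LDS K_def left_diff_distrib sum_subtractf)
    qed
  qed
  have coeqD: "Poly_Mapping.lookup p m = Poly_Mapping.lookup q m" if "mdeg m = D" for m
  proof (cases "m \<in> S")
    case True then show ?thesis using coeq by simp
  next
    case False
    then have "m \<notin> Poly_Mapping.keys p" "m \<notin> Poly_Mapping.keys q" using that by (auto simp: S_def K_def)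
    then show ?thesis by (simp add: in_keys_iff)
  qed
  have "m0 \<in> Poly_Mapping.keys p \<or> m0 \<in> Poly_Mapping.keys q" using m0 by (simp add: K_def)
  then have m0pq: "m0 \<in> Poly_Mapping.keys p" "m0 \<in> Poly_Mapping.keys q"
    using coeqD[OF m0(2)] by (auto simp: in_keys_iff)
  have "pdeg p = D" unfolding pdeg_def
  proof (rule antisym)
    show "Max (mdeg ` Poly_Mapping.keys p) \<le> D" using hp m0pq by (subst Max_le_iff) auto
    have "D \<in> mdeg ` Poly_Mapping.keys p" using m0pq m0(2) by force
    then show "D \<le> Max (mdeg ` Poly_Mapping.keys p)" by (intro Max_ge) auto
  qed
  moreover have "pdeg q = D" unfolding pdeg_def
  proof (rule antisym)
    show "Max (mdeg ` Poly_Mapping.keys q) \<le> D" using hq m0pq by (subst Max_le_iff) auto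
    have "D \<in> mdeg ` Poly_Mapping.keys q" using m0pq m0(2) by force
    then show "D \<le> Max (mdeg ` Poly_Mapping.keys q)" by (intro Max_ge) auto
  qed
  ultimately show ?thesis
    by (auto simp: lead_hom_def fun_eq_iff coeqD)
qed

end
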